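(* Let $X=[0,\infty)\subset\mathbb{R}$ and $\mathcal{A}=\{\alpha_1,\dots,\alpha_m\}\subset\mathbb{R}$ with $\alpha_1<\cdots<\alpha_m$; identify $\mathbb{R}^{\mathcal{A}}$ with $\mathbb{R}^m$ with standard basis $\delta_1,\dots,\delta_m$. Then the set of normalized reduced $[0,\infty)$-circuits of $\mathcal{A}$ is \[\Lambda^\star_{[0,\infty)}(\mathcal{A})=\{\delta_2-\delta_1\}\cup\Big\{\frac{\alpha_{i+1}-\alpha_i}{\alpha_{i+1}-\alpha_{i-1}}\delta_{i-1}+\frac{\alpha_i-\alpha_{i-1}}{\alpha_{i+1}-\alpha_{i-1}}\delta_{i+1}-\delta_i\ :\ 1<i<m\Big\}\] (for $m\ge2$).
   Context: For a nonempty closed convex $X\subset\mathbb{R}^n$ and nonempty finite $\mathcal{A}\subset\mathbb{R}^n$: $\mathcal{A}\nu=\sum_\alpha\alpha\nu_\alpha$ for $\nu\in\mathbb{R}^{\mathcal{A}}$; $\sigma_X(y)=\sup\{y^Tx:x\in X\}\in\mathbb{R}\cup\{+\infty\}$; for $\beta\in\mathcal{A}$, $N_\beta=\{\nu\in\mathbb{R}^{\mathcal{A}}:\nu_\alpha\ge0\ \forall\alpha\neq\beta,\ \sum_\alpha\nu_\alpha=0\}$. A vector $\nu^\star\in N_\beta$ is an $X$-circuit of $\mathcal{A}$ if (1) $\nu^\star\neq0$, (2) $\sigma_X(-\mathcal{A}\nu^\star)<\infty$, and (3) $\nu^\star$ cannot be written as a convex combination of two non-proportional vectors $\nu^{(1)},\nu^{(2)}\in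 N_\beta$ such that the map $\nu\mapsto\sigma_X(-\mathcal{A}\nu)$ is affine on the segment $[\nu^{(1)},\nu^{(2)}]$. $\Lambda_X(\mathcal{A})$ is the set of all $X$-circuits normalized so that the unique negative entry equals $-1$. The functional form of $\lambda\in\Lambda_X(\mathcal{A})$ is $\phi_\lambda=(\lambda,\sigma_X(-\mathcal{A}\lambda))\in\mathbb{R}^{\mathcal{A}}\times\mathbb{R}$; the circuit graph is $G_X(\mathcal{A})=\operatorname{cone}(\{\phi_\lambda:\lambda\in\Lambda_X(\mathcal{A})\}\cup\{(0,1)\})$; and the normalized reduced $X$-circuits $\Lambda_X^\star(\mathcal{A})$ are those $\lambda\in\Lambda_X(\mathcal{A})$ for which $\{t\phi_\lambda:t\ge0\}$ is an extreme ray of $G_X(\mathcal{A})$. *)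

theory Defs
  imports "HOL-Analysis.Analysis"
begin

text \<open>Vectors in R^A are modelled as functions nu :: 'v => real that vanish outside A.\<close>

definition lin_comb :: "'v::real_vector set \<Rightarrow> ('v \<Rightarrow> real) \<Rightarrow> 'v" where
  "lin_comb A \<nu> = (\<Sum>a\<in>A. \<nu> a *\<^sub>R a)"

definition supp_fun :: "'v::real_inner set \<Rightarrow> 'v \<Rightarrow> ereal" where
  "supp_fun X y = (SUP x\<in>X. ereal (y \<bullet> x))"

definition circ_fun :: "'v::real_inner set \<Rightarrow> 'v set \<Rightarrow> ('v \<Rightarrow> real) \<Rightarrow> ereal" where
  "circ_fun X A \<nu> = supp_fun X (- lin_comb A \<nu>)"

definition Ncone :: "'v set \<Rightarrow> 'v \<Rightarrow> ('v \<Rightarrow> real) set" where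
  "Ncone A \<beta> = {\<nu>. (\<forall>a. a \<notin> A \<longrightarrow> \<nu> a = 0) \<and> (\<forall>a\<in>A. a \<noteq> \<beta> \<longrightarrow> \<nu> a \<ge> 0) \<and> (\<Sum>a\<in>A. \<nu> a) = 0}"

definition proportional :: "('v \<Rightarrow> real) \<Rightarrow> ('v \<Rightarrow> real) \<Rightarrow> bool" where
  "proportional \<mu> \<nu> \<longleftrightarrow> (\<exists>c. \<mu> = (\<lambda>a. c * \<nu> a)) \<or> (\<exists>c. \<nu> = (\<lambda>a. c * \<mu> a))"

definition affine_on_segment :: "'v::real_inner set \<Rightarrow> 'v set \<Rightarrow> ('v \<Rightarrow> real) \<Rightarrow> ('v \<Rightarrow> real) \<Rightarrow> bool" where
  "affine_on_segment X A \<nu>1 \<nu>2 \<longleftrightarrow>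
     circ_fun X A \<nu>1 < \<infinity> \<and> circ_fun X A \<nu>2 < \<infinity> \<and>
     (\<forall>s::real. 0 \<le> s \<and> s \<le> 1 \<longrightarrow>
        circ_fun X A (\<lambda>a. (1 - s) * \<nu>1 a + s * \<nu>2 a)
          = ereal (1 - s) * circ_fun X A \<nu>1 + ereal s * circ_fun X A \<nu>2)"

definition is_X_circuit :: "'v::real_inner set \<Rightarrow> 'v set \<Rightarrow> 'v \<Rightarrow> ('v \<Rightarrow> real) \<Rightarrow> bool" where
  "is_X_circuit X A \<beta> \<nu> \<longleftrightarrow>
     \<nu> \<in> Ncone A \<beta> \<and> \<nu> \<noteq> (\<lambda>_. 0) \<and> circ_fun X A \<nu> < \<infinity> \<and>
     \<not> (\<exists>\<nu>1 \<in> Ncone A \<beta>. \<exists>\<nu>2 \<in> Ncone A \<beta>. \<exists>t::real. 0 < t \<and> t < 1 \<and>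
          \<not> proportional \<nu>1 \<nu>2 \<and>
          \<nu> = (\<lambda>a. (1 - t) * \<nu>1 a + t * \<nu>2 a) \<and>
          affine_on_segment X A \<nu>1 \<nu>2)"

definition norm_circuits :: "'v::real_inner set \<Rightarrow> 'v set \<Rightarrow> ('v \<Rightarrow> real) set" where
  "norm_circuits X A = {l. \<exists>\<beta>\<in>A. is_X_circuit X A \<beta> l \<and> l \<beta> = -1}"

definition func_form :: "'v::real_inner set \<Rightarrow> 'v set \<Rightarrow> ('v \<Rightarrow> real) \<Rightarrow> ('v \<Rightarrow> real) \<times> real" where
  "func_form X A l = (l, real_of_ereal (circ_fun X A l))"

definition circuit_graph :: "'v::real_inner set \<Rightarrow> 'v set \<Rightarrow> (('v \<Rightarrow> real) \<times> real) set" where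
  "circuit_graph X A = {(\<nu>, r). \<exists>S c d. finite S \<and> S \<subseteq> norm_circuits X A \<and>
       (\<forall>l\<in>S. c l \<ge> (0::real)) \<and> d \<ge> (0::real) \<and>
       \<nu> = (\<lambda>a. \<Sum>l\<in>S. c l * fst (func_form X A l) a) \<and>
       r = (\<Sum>l\<in>S. c l * snd (func_form X A l)) + d}"

definition ray :: "('v \<Rightarrow> real) \<times> real \<Rightarrow> (('v \<Rightarrow> real) \<times> real) set" where
  "ray p = {((\<lambda>a. t * fst p a), t * snd p) | t. t \<ge> (0::real)}"

definition extreme_ray :: "(('v \<Rightarrow> real) \<times> real) set \<Rightarrow> ('v \<Rightarrow> real) \<times> real \<Rightarrow> bool" where
  "extreme_ray G p \<longleftrightarrow> p \<noteq> ((\<lambda>_. 0), 0) \<and> ray p \<subseteq> G \<and>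
     (\<forall>x\<in>G. \<forall>y\<in>G. ((\<lambda>a. fst x a + fst y a), snd x + snd y) \<in> ray p \<longrightarrow> x \<in> ray p \<and> y \<in> ray p)"

definition reduced_circuits :: "'v::real_inner set \<Rightarrow> 'v set \<Rightarrow> ('v \<Rightarrow> real) set" where
  "reduced_circuits X A = {l \<in> norm_circuits X A. extreme_ray (circuit_graph X A) (func_form X A l)}"

end

theory Submission imports Defs begin

definition Dv :: "(nat \<Rightarrow> real) \<Rightarrow> real \<Rightarrow> real" where
  "Dv \<alpha> = (\<lambda>a. (if a = \<alpha> 2 then 1 else 0) - (if a = \<alpha> 1 then 1 else 0))"
definition Tv :: "(nat \<Rightarrow> real) \<Rightarrow> nat \<Rightarrow> real \<Rightarrow> real" where
  "Tv \<alpha> i = (\<lambda>a. (\<alpha> (i+1) - \<alpha> i) / (\<alpha> (i+1) - \<alpha> (i-1)) * (if a = \<alpha> (i-1) then 1 else 0)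
                 + (\<alpha> i - \<alpha> (i-1)) / (\<alpha> (i+1) - \<alpha> (i-1)) * (if a = \<alpha> (i+1) then 1 else 0)
                 - (if a = \<alpha> i then 1 else 0))"
definition Gen :: "(nat \<Rightarrow> real) \<Rightarrow> nat \<Rightarrow> real \<Rightarrow> real" where
  "Gen \<alpha> i = (if i = 1 then Dv \<alpha> else Tv \<alpha> i)"
definition wt :: "(nat \<Rightarrow> real) \<Rightarrow> nat \<Rightarrow> real" where
  "wt \<alpha> i = (if i = 1 then 1 else (\<alpha> i - \<alpha> (i-1)) / (\<alpha> (i+1) - \<alpha> (i-1)))"
definition phi :: "(nat \<Rightarrow> real) \<Rightarrow> nat \<Rightarrow> nat \<Rightarrow> (real \<Rightarrow> real) \<Rightarrow> real" where
  "phi \<alpha> m j \<nu> = (\<Sum>a\<in>\<alpha>`{1..m}. \<nu> a * max 0 (a - \<alpha> j))"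
definition Kc :: "(nat \<Rightarrow> real) \<Rightarrow> nat \<Rightarrow> (real \<Rightarrow> real) set" where
  "Kc \<alpha> m = {\<nu>. \<exists>c. (\<forall>i. 0 \<le> c i) \<and> \<nu> = (\<lambda>a. \<Sum>i\<in>{1..<m}. c i * Gen \<alpha> i a)}"

lemma sum_ind3:
  fixes A :: "real set" and h :: "real \<Rightarrow> real" and c1 c2 :: real
  assumes "finite A" "p1 \<in> A" "p2 \<in> A" "p3 \<in> A"
  shows "(\<Sum>a\<in>A. (c1 * (if a = p1 then 1 else 0) + c2 * (if a = p2 then 1 else 0) - (if a = p3 then 1 else 0)) * h a)
     = c1 * h p1 + c2 * h p2 - h p3"
proof -
  have "(\<Sum>a\<in>A. (c1 * (if a = p1 then 1 else 0) + c2 * (if a = p2 then 1 else 0) - (if a = p3 then 1 else 0)) * h a)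
     = (\<Sum>a\<in>A. (if a = p1 then c1 * h a else 0) + (if a = p2 then c2 * h a else 0) - (if a = p3 then h a else 0))"
    by (rule sum.cong) (auto simp: left_diff_distrib distrib_right)
  also have "\<dots> = c1 * h p1 + c2 * h p2 - h p3"
    using assms by (simp add: sum.distrib sum_subtractf)
  finally show ?thesis .
qed

lemma sum_ind2:
  fixes A :: "real set" and h :: "real \<Rightarrow> real"
  assumes "finite A" "p1 \<in> A" "p2 \<in> A"
  shows "(\<Sum>a\<in>A. ((if a = p1 then 1 else 0) - (if a = p2 then 1 else 0)) * h a) = h p1 - h p2"
proof -
  have "(\<Sum>a\<in>A. ((if a = p1 then 1 else 0) - (if a = p2 then 1 else 0)) * h a)
     = (\<Sum>a\<in>A. (if a = p1 then h a else 0) - (if a = p2 then h a else 0))"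
    by (rule sum.cong) (auto simp: left_diff_distrib distrib_right)
  also have "\<dots> = h p1 - h p2"
    using assms by (simp add: sum_subtractf)
  finally show ?thesis .
qed

lemma circ_char:
  fixes A :: "real set"
  shows "circ_fun {0..} A \<nu> = (if lin_comb A \<nu> \<ge> 0 then 0 else \<infinity>)"
proof -
  define y where "y = - lin_comb A \<nu>"
  have "circ_fun {0..} A \<nu> = (SUP x\<in>{0::real..}. ereal (y * x))"
    by (simp add: circ_fun_def supp_fun_def y_def)
  also have "\<dots> = (if y \<le> 0 then 0 else \<infinity>)"
  proof (cases "y \<le> 0")
    case True
    have "(SUP x\<in>{0::real..}. ereal (y * x)) = 0"
    proof (rule antisym)
      show "(SUP x\<in>{0::real..}. ereal (y * x)) \<le> 0"
        by (rule SUP_least) (use True in \<open>auto simp: mult_nonpos_nonneg\<close>)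
      show "0 \<le> (SUP x\<in>{0::real..}. ereal (y * x))"
        using SUP_upper[of "0::real" "{0..}" "\<lambda>x. ereal (y * x)"] by (simp add: zero_ereal_def)
    qed
    then show ?thesis using True by simp
  next
    case False
    have "(SUP x\<in>{0::real..}. ereal (y * x)) = \<infinity>"
    proof (rule SUP_PInfty)
      fix n :: nat
      show "\<exists>i\<in>{0::real..}. ereal (real n) \<le> ereal (y * i)"
        using False by (intro bexI[of _ "real n / y"]) auto
    qed
    then show ?thesis using False by simp
  qed
  finally show ?thesis by (simp add: y_def)
qed

lemma lin_comb_real: "lin_comb A \<nu> = (\<Sum>a\<in>A. \<nu> a * (a::real))"
  by (simp add: lin_comb_def)

context
  fixes \<alpha> :: "nat \<Rightarrow> real" and m :: nat
  assumes m2: "m \<ge> 2" and mono: "strict_mono_on {1..m} \<alpha>"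
begin

lemma alt: "i \<in> {1..m} \<Longrightarrow> j \<in> {1..m} \<Longrightarrow> i < j \<Longrightarrow> \<alpha> i < \<alpha> j"
  using mono by (simp add: strict_mono_on_def)

lemma ale: "i \<in> {1..m} \<Longrightarrow> j \<in> {1..m} \<Longrightarrow> \<alpha> i \<le> \<alpha> j \<longleftrightarrow> i \<le> j"
  using alt[of i j] alt[of j i] by (cases i j rule: linorder_cases) auto

lemma aeq: "i \<in> {1..m} \<Longrightarrow> j \<in> {1..m} \<Longrightarrow> \<alpha> i = \<alpha> j \<longleftrightarrow> i = j"
  using alt[of i j] alt[of j i] by (cases i j rule: linorder_cases) auto

lemma finA: "finite (\<alpha> ` {1..m})" by simp

lemma inA: "j \<in> {1..m} \<Longrightarrow> \<alpha> j \<in> \<alpha> ` {1..m}" by simp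

lemma idx3:
  assumes "i \<in> {1..<m}" "i \<noteq> 1"
  shows "i - 1 \<in> {1..m}" "i \<in> {1..m}" "i + 1 \<in> {1..m}" "i - 1 < i" "i < i + 1"
  using assms by auto

lemma D_at:
  assumes "j \<in> {1..m}"
  shows "Dv \<alpha> (\<alpha> j) = (if j = 2 then 1 else if j = 1 then -1 else 0)"
proof -
  have e1: "\<alpha> j = \<alpha> 1 \<longleftrightarrow> j = 1" using aeq[of j 1] assms m2 by auto
  have e2: "\<alpha> j = \<alpha> 2 \<longleftrightarrow> j = 2" using aeq[of j 2] assms m2 by auto
  show ?thesis unfolding Dv_def using e1 e2 by auto
qed

lemma T_at:
  assumes "i \<in> {2..<m}" "j \<in> {1..m}"
  shows "Tv \<alpha> i (\<alpha> j) = (if j = i - 1 then (\<alpha> (i+1) - \<alpha> i) / (\<alpha> (i+1) - \<alpha> (i-1))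
     else if j = i + 1 then (\<alpha> i - \<alpha> (i-1)) / (\<alpha> (i+1) - \<alpha> (i-1))
     else if j = i then -1 else 0)"
proof -
  have ii: "i \<in> {1..<m}" "i \<noteq> 1" using assms by auto
  have e1: "\<alpha> j = \<alpha> (i-1) \<longleftrightarrow> j = i-1" using aeq[OF assms(2) idx3(1)[OF ii]] .
  have e2: "\<alpha> j = \<alpha> i \<longleftrightarrow> j = i" using aeq[OF assms(2) idx3(2)[OF ii]] .
  have e3: "\<alpha> j = \<alpha> (i+1) \<longleftrightarrow> j = i+1" using aeq[OF assms(2) idx3(3)[OF ii]] .
  have d: "i - 1 \<noteq> i" "i - 1 \<noteq> i + 1" "i \<noteq> i + 1" using ii by auto
  consider "j = i - 1" | "j = i" | "j = i + 1" | "j \<noteq> i - 1" "j \<noteq> i" "j \<noteq> i + 1" by blast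
  then show ?thesis
  proof cases
    case 1 then show ?thesis unfolding Tv_def e1 e2 e3 using d by simp
  next
    case 2 then show ?thesis unfolding Tv_def e1 e2 e3 using d by simp
  next
    case 3 then show ?thesis unfolding Tv_def e1 e2 e3 using d by simp
  next
    case 4 then show ?thesis unfolding Tv_def e1 e2 e3 by simp
  qed
qed

lemma G_out:
  assumes "i \<in> {1..<m}" "a \<notin> \<alpha> ` {1..m}"
  shows "Gen \<alpha> i a = 0"
proof (cases "i = 1")
  case True
  have "a \<noteq> \<alpha> 1" "a \<noteq> \<alpha> 2" using assms(2) inA[of 1] inA[of 2] m2 by auto
  then show ?thesis using True by (simp add: Gen_def Dv_def)
next
  case False
  have "a \<noteq> \<alpha> (i-1)" "a \<noteq> \<alpha> i" "a \<noteq> \<alpha> (i+1)"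
    using assms(2) inA[OF idx3(1)[OF assms(1) False]] inA[OF idx3(2)[OF assms(1) False]]
      inA[OF idx3(3)[OF assms(1) False]] by auto
  then show ?thesis using False by (simp add: Gen_def Tv_def)
qed

lemma G_at:
  assumes "i \<in> {1..<m}" "j \<in> {1..m}"
  shows "Gen \<alpha> i (\<alpha> j) = (if j = i then -1 else if j = i + 1 then wt \<alpha> i else
     if i \<noteq> 1 \<and> j = i - 1 then (\<alpha> (i+1) - \<alpha> i) / (\<alpha> (i+1) - \<alpha> (i-1)) else 0)"
proof (cases "i = 1")
  case True
  then show ?thesis using D_at[OF assms(2)] by (auto simp: Gen_def wt_def)
next
  case False
  then have i2: "i \<in> {2..<m}" using assms by auto
  show ?thesis using T_at[OF i2 assms(2)] False i2 by (auto simp: Gen_def wt_def)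
qed

lemma G_self:
  assumes "i \<in> {1..<m}"
  shows "Gen \<alpha> i (\<alpha> i) = -1"
  using G_at[OF assms, of i] assms by simp

lemma G_next:
  assumes "i \<in> {1..<m}"
  shows "Gen \<alpha> i (\<alpha> (i+1)) = wt \<alpha> i"
  using G_at[OF assms, of "i+1"] assms by simp

lemma G_far:
  assumes "i \<in> {1..<m}" "j \<in> {1..m}" "j > i+1"
  shows "Gen \<alpha> i (\<alpha> j) = 0"
  using G_at[OF assms(1,2)] assms(3) by auto

lemma wt_pos:
  assumes "i \<in> {1..<m}"
  shows "wt \<alpha> i > 0"
proof (cases "i = 1")
  case False
  then have "\<alpha> (i-1) < \<alpha> i" "\<alpha> (i-1) < \<alpha> (i+1)"
    using alt[OF idx3(1,2,4)[OF assms False]] alt[OF idx3(1,3)[OF assms False]] idx3(4,5)[OF assms False] by auto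
  then show ?thesis using False by (simp add: wt_def)
qed (simp add: wt_def)

lemma w1_pos:
  assumes "i \<in> {1..<m}" "i \<noteq> 1"
  shows "(\<alpha> (i+1) - \<alpha> i) / (\<alpha> (i+1) - \<alpha> (i-1)) > 0"
proof -
  have "\<alpha> i < \<alpha> (i+1)" "\<alpha> (i-1) < \<alpha> (i+1)"
    using alt[OF idx3(2,3,5)[OF assms]] alt[OF idx3(1,3)[OF assms]] idx3(4,5)[OF assms] by auto
  then show ?thesis by simp
qed

lemma G_nonneg:
  assumes "i \<in> {1..<m}" "j \<in> {1..m}" "j \<noteq> i"
  shows "Gen \<alpha> i (\<alpha> j) \<ge> 0"
  using G_at[OF assms(1,2)] assms(3) wt_pos[OF assms(1)] w1_pos[OF assms(1)]
  by auto

lemma G_sum: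
  assumes "i \<in> {1..<m}"
  shows "(\<Sum>a\<in>\<alpha> ` {1..m}. Gen \<alpha> i a * h a) =
    (if i = 1 then h (\<alpha> 2) - h (\<alpha> 1) else
       (\<alpha> (i+1) - \<alpha> i) / (\<alpha> (i+1) - \<alpha> (i-1)) * h (\<alpha> (i-1)) + wt \<alpha> i * h (\<alpha> (i+1)) - h (\<alpha> i))"
proof (cases "i = 1")
  case True
  then show ?thesis using m2
    by (simp add: Gen_def Dv_def sum_ind2)
next
  case False
  have "(\<Sum>a\<in>\<alpha> ` {1..m}. Tv \<alpha> i a * h a) = (\<alpha> (i+1) - \<alpha> i) / (\<alpha> (i+1) - \<alpha> (i-1)) * h (\<alpha> (i-1)) + (\<alpha> i - \<alpha> (i-1)) / (\<alpha> (i+1) - \<alpha> (i-1)) * h (\<alpha> (i+1)) - h (\<alpha> i)"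
    unfolding Tv_def
    by (rule sum_ind3[OF finA inA[OF idx3(1)[OF assms False]] inA[OF idx3(3)[OF assms False]] inA[OF idx3(2)[OF assms False]]])
  then show ?thesis using False by (simp add: Gen_def wt_def)
qed

lemma phi_Gen:
  assumes "i \<in> {1..<m}" "j \<in> {1..<m}"
  shows "phi \<alpha> m j (Gen \<alpha> i) = (if j = i then wt \<alpha> i * (\<alpha> (i+1) - \<alpha> i) else 0)"
proof -
  have ph: "phi \<alpha> m j (Gen \<alpha> i) = (if i = 1 then max 0 (\<alpha> 2 - \<alpha> j) - max 0 (\<alpha> 1 - \<alpha> j) else
       (\<alpha> (i+1) - \<alpha> i) / (\<alpha> (i+1) - \<alpha> (i-1)) * max 0 (\<alpha> (i-1) - \<alpha> j) + wt \<alpha> i * max 0 (\<alpha> (i+1) - \<alpha> j) - max 0 (\<alpha> i - \<alpha> j))"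
    unfolding phi_def by (rule G_sum[OF assms(1)])
  show ?thesis
  proof (cases "i = 1")
    case True
    have j: "j \<in> {1..m}" using assms by auto
    have "\<alpha> 1 < \<alpha> 2" using alt[of 1 2] m2 by auto
    moreover have "j \<noteq> 1 \<Longrightarrow> \<alpha> 2 \<le> \<alpha> j" using ale[of 2 j] j m2 by auto
    moreover have "\<alpha> 1 \<le> \<alpha> j" using ale[of 1 j] j by auto
    ultimately show ?thesis using ph True by (auto simp: wt_def numeral_2_eq_2)
  next
    case False
    define a where "a = \<alpha> (i-1)"
    define b where "b = \<alpha> i"
    define c where "c = \<alpha> (i+1)"
    define d where "d = \<alpha> j"
    have ab: "a < b" and bc: "b < c" unfolding a_def b_def c_def
      using alt[OF idx3(1,2,4)[OF assms(1) False]] alt[OF idx3(2,3,5)[OF assms(1) False]] by auto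
    have wt: "wt \<alpha> i = (b - a) / (c - a)" using False by (simp add: wt_def a_def b_def c_def)
    have ph2: "phi \<alpha> m j (Gen \<alpha> i) = (c - b) / (c - a) * max 0 (a - d) + (b - a) / (c - a) * max 0 (c - d) - max 0 (b - d)"
      using ph False wt by (simp add: a_def b_def c_def d_def)
    consider "j < i" | "j = i" | "j > i" by linarith
    then show ?thesis
    proof cases
      case 1
      have "d \<le> a" unfolding a_def d_def using assms 1 ale[OF _ idx3(1)[OF assms(1) False], of j] by auto
      then have "phi \<alpha> m j (Gen \<alpha> i) = (c - b) / (c - a) * (a - d) + (b - a) / (c - a) * (c - d) - (b - d)"
        using ph2 ab bc by simp
      also have "\<dots> = 0"
      proof -
        define w1 where "w1 = (c - b) / (c - a)"
        define w2 where "w2 = (b - a) / (c - a)"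
        have ne: "c - a \<noteq> 0" using ab bc by simp
        have s1: "w2 = 1 - w1" unfolding w1_def w2_def using ne by (simp add: field_simps)
        have p: "(c - b) * a + (b - a) * c = b * (c - a)" by (simp add: algebra_simps)
        have "w1 * a + w2 * c = ((c - b) * a + (b - a) * c) / (c - a)"
          unfolding w1_def w2_def by (simp add: add_divide_distrib)
        also have "\<dots> = b" unfolding p using ne by simp
        finally have s2: "b = w1 * a + w2 * c" by simp
        have "w1 * (a - d) + w2 * (c - d) - (b - d) = 0" unfolding s2 s1 by (simp add: algebra_simps)
        then show ?thesis unfolding w1_def w2_def .
      qed
      finally have "phi \<alpha> m j (Gen \<alpha> i) = 0" by simp
      then show ?thesis using 1 by simp
    next
      case 2
      then show ?thesis using ph2 ab bc wt by (simp add: a_def b_def c_def d_def)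
    next
      case 3
      have "c \<le> d" unfolding c_def d_def using assms 3 ale[OF idx3(3)[OF assms(1) False], of j] by auto
      then show ?thesis using ph2 ab bc 3 by simp
    qed
  qed
qed

lemma phi_add: "phi \<alpha> m j (\<lambda>a. f a + g a) = phi \<alpha> m j f + phi \<alpha> m j g"
  unfolding phi_def by (simp add: distrib_right sum.distrib)

lemma phi_diff: "phi \<alpha> m j (\<lambda>a. f a - g a) = phi \<alpha> m j f - phi \<alpha> m j g"
  unfolding phi_def by (simp add: left_diff_distrib sum_subtractf)

lemma phi_scale: "phi \<alpha> m j (\<lambda>a. s * f a) = s * phi \<alpha> m j f"
  unfolding phi_def by (simp add: sum_distrib_left mult.assoc)

lemma phi_sum: "phi \<alpha> m j (\<lambda>a. \<Sum>i\<in>I. c i * f i a) = (\<Sum>i\<in>I. c i * phi \<alpha> m j (f i))"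
  unfolding phi_def by (simp add: sum_distrib_left sum_distrib_right mult.assoc) (rule sum.swap)

lemma W_pos:
  assumes "j \<in> {1..<m}"
  shows "wt \<alpha> j * (\<alpha> (j+1) - \<alpha> j) > 0"
proof -
  have "\<alpha> j < \<alpha> (j+1)" using alt[of j "j+1"] assms by auto
  then show ?thesis using wt_pos[OF assms] by simp
qed

lemma phi_K:
  assumes "j \<in> {1..<m}"
  shows "phi \<alpha> m j (\<lambda>a. \<Sum>i\<in>{1..<m}. c i * Gen \<alpha> i a) = c j * (wt \<alpha> j * (\<alpha> (j+1) - \<alpha> j))"
proof -
  have "phi \<alpha> m j (\<lambda>a. \<Sum>i\<in>{1..<m}. c i * Gen \<alpha> i a) = (\<Sum>i\<in>{1..<m}. c i * phi \<alpha> m j (Gen \<alpha> i))"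
    by (rule phi_sum)
  also have "\<dots> = (\<Sum>i\<in>{1..<m}. if j = i then c i * (wt \<alpha> i * (\<alpha> (i+1) - \<alpha> i)) else 0)"
  proof (rule sum.cong[OF refl])
    fix i assume i: "i \<in> {1..<m}"
    show "c i * phi \<alpha> m j (Gen \<alpha> i) = (if j = i then c i * (wt \<alpha> i * (\<alpha> (i+1) - \<alpha> i)) else 0)"
      using phi_Gen[OF i assms] by simp
  qed
  also have "\<dots> = c j * (wt \<alpha> j * (\<alpha> (j+1) - \<alpha> j))" using assms by simp
  finally show ?thesis .
qed

lemma K_zero: "(\<lambda>_. 0) \<in> Kc \<alpha> m"
  unfolding Kc_def by (rule CollectI, rule exI[of _ "\<lambda>_. 0"]) simp

lemma K_add:
  assumes "f \<in> Kc \<alpha> m" "g \<in> Kc \<alpha> m"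
  shows "(\<lambda>a. f a + g a) \<in> Kc \<alpha> m"
proof -
  obtain cf where cf: "\<forall>i. 0 \<le> cf i" "f = (\<lambda>a. \<Sum>i\<in>{1..<m}. cf i * Gen \<alpha> i a)" using assms(1) unfolding Kc_def by auto
  obtain cg where cg: "\<forall>i. 0 \<le> cg i" "g = (\<lambda>a. \<Sum>i\<in>{1..<m}. cg i * Gen \<alpha> i a)" using assms(2) unfolding Kc_def by auto
  show ?thesis unfolding Kc_def
    by (rule CollectI, rule exI[of _ "\<lambda>i. cf i + cg i"]) (simp add: cf cg add_nonneg_nonneg distrib_right sum.distrib)
qed

lemma K_scale:
  assumes "f \<in> Kc \<alpha> m" "s \<ge> 0"
  shows "(\<lambda>a. s * f a) \<in> Kc \<alpha> m"
proof -
  obtain cf where cf: "\<forall>i. 0 \<le> cf i" "f = (\<lambda>a. \<Sum>i\<in>{1..<m}. cf i * Gen \<alpha> i a)" using assms(1) unfolding Kc_def by auto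
  show ?thesis unfolding Kc_def
    by (rule CollectI, rule exI[of _ "\<lambda>i. s * cf i"]) (simp add: cf assms(2) sum_distrib_left mult.assoc)
qed

lemma K_gen:
  assumes "k \<in> {1..<m}"
  shows "Gen \<alpha> k \<in> Kc \<alpha> m"
proof -
  have "Gen \<alpha> k = (\<lambda>a. \<Sum>i\<in>{1..<m}. (if i = k then 1 else 0) * Gen \<alpha> i a)"
  proof
    fix a
    have "(\<Sum>i\<in>{1..<m}. (if i = k then 1 else 0) * Gen \<alpha> i a) = (\<Sum>i\<in>{1..<m}. if i = k then Gen \<alpha> k a else 0)"
      by (rule sum.cong) auto
    also have "\<dots> = Gen \<alpha> k a" using assms by simp
    finally show "Gen \<alpha> k a = (\<Sum>i\<in>{1..<m}. (if i = k then 1 else 0) * Gen \<alpha> i a)" by simp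
  qed
  then show ?thesis unfolding Kc_def by (intro CollectI exI[of _ "\<lambda>i. if i = k then 1 else 0"]) auto
qed

lemma K_sum:
  assumes "finite S"
  shows "S \<subseteq> Kc \<alpha> m \<Longrightarrow> (\<forall>l\<in>S. c l \<ge> 0) \<Longrightarrow> (\<lambda>a. \<Sum>l\<in>S. c l * l a) \<in> Kc \<alpha> m"
  using assms
proof (induction S rule: finite_induct)
  case empty
  then show ?case using K_zero by simp
next
  case (insert x F)
  have "(\<lambda>a. c x * x a + (\<Sum>l\<in>F. c l * l a)) \<in> Kc \<alpha> m"
    using insert by (intro K_add K_scale) auto
  then show ?case using insert by simp
qed

lemma K_extreme:
  assumes k: "k \<in> {1..<m}" and x: "x \<in> Kc \<alpha> m" and y: "y \<in> Kc \<alpha> m"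
    and xy: "(\<lambda>a. x a + y a) = (\<lambda>a. s * Gen \<alpha> k a)"
  shows "\<exists>s'\<ge>0. x = (\<lambda>a. s' * Gen \<alpha> k a)"
proof -
  obtain cx where cx: "\<forall>i. 0 \<le> cx i" "x = (\<lambda>a. \<Sum>i\<in>{1..<m}. cx i * Gen \<alpha> i a)" using x unfolding Kc_def by auto
  obtain cy where cy: "\<forall>i. 0 \<le> cy i" "y = (\<lambda>a. \<Sum>i\<in>{1..<m}. cy i * Gen \<alpha> i a)" using y unfolding Kc_def by auto
  have z: "cx j = 0" if j: "j \<in> {1..<m}" "j \<noteq> k" for j
  proof -
    have "phi \<alpha> m j x + phi \<alpha> m j y = s * phi \<alpha> m j (Gen \<alpha> k)"
      using arg_cong[OF xy, of "phi \<alpha> m j"] by (simp add: phi_add phi_scale)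
    also have "\<dots> = 0" using phi_Gen[OF k j(1)] j by simp
    finally have e: "cx j * (wt \<alpha> j * (\<alpha> (j+1) - \<alpha> j)) + cy j * (wt \<alpha> j * (\<alpha> (j+1) - \<alpha> j)) = 0"
      using phi_K[OF j(1)] cx cy by simp
    have "cx j * (wt \<alpha> j * (\<alpha> (j+1) - \<alpha> j)) \<ge> 0" "cy j * (wt \<alpha> j * (\<alpha> (j+1) - \<alpha> j)) \<ge> 0"
      using W_pos[OF j(1)] cx cy by auto
    then have h: "cx j * (wt \<alpha> j * (\<alpha> (j+1) - \<alpha> j)) = 0" using e by linarith
    have Wn: "wt \<alpha> j * (\<alpha> (j+1) - \<alpha> j) \<noteq> 0" using W_pos[OF j(1)] by linarith
    show ?thesis using h Wn by (metis mult_eq_0_iff)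
  qed
  have "x = (\<lambda>a. cx k * Gen \<alpha> k a)"
  proof
    fix a
    have "x a = (\<Sum>i\<in>{1..<m}. if i = k then cx k * Gen \<alpha> k a else 0)"
      unfolding cx(2) by (rule sum.cong) (auto simp: z)
    also have "\<dots> = cx k * Gen \<alpha> k a" using k by simp
    finally show "x a = cx k * Gen \<alpha> k a" .
  qed
  then show ?thesis using cx(1) by blast
qed

lemma inA_cases:
  assumes "a \<in> \<alpha> ` {1..m}"
  obtains j where "j \<in> {1..m}" "a = \<alpha> j"
  using assms by auto

lemma G_sum1:
  assumes "k \<in> {1..<m}"
  shows "(\<Sum>a\<in>\<alpha> ` {1..m}. Gen \<alpha> k a) = 0"
proof -
  have "(\<Sum>a\<in>\<alpha> ` {1..m}. Gen \<alpha> k a) = (\<Sum>a\<in>\<alpha> ` {1..m}. Gen \<alpha> k a * (\<lambda>_. 1) a)" by simp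
  also have "\<dots> = 0"
  proof (cases "k = 1")
    case False
    have "\<alpha> (k-1) < \<alpha> (k+1)" using alt[OF idx3(1,3)[OF assms False]] idx3(4,5)[OF assms False] by auto
    then have d: "\<alpha> (k+1) - \<alpha> (k-1) \<noteq> 0" by simp
    have "(\<alpha> (k+1) - \<alpha> k) / (\<alpha> (k+1) - \<alpha> (k-1)) + (\<alpha> k - \<alpha> (k-1)) / (\<alpha> (k+1) - \<alpha> (k-1)) - 1 = 0"
    proof -
      have "(\<alpha> (k+1) - \<alpha> k) / (\<alpha> (k+1) - \<alpha> (k-1)) + (\<alpha> k - \<alpha> (k-1)) / (\<alpha> (k+1) - \<alpha> (k-1))
          = ((\<alpha> (k+1) - \<alpha> k) + (\<alpha> k - \<alpha> (k-1))) / (\<alpha> (k+1) - \<alpha> (k-1))"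
        by (rule add_divide_distrib[symmetric])
      also have "(\<alpha> (k+1) - \<alpha> k) + (\<alpha> k - \<alpha> (k-1)) = \<alpha> (k+1) - \<alpha> (k-1)" by simp
      also have "(\<alpha> (k+1) - \<alpha> (k-1)) / (\<alpha> (k+1) - \<alpha> (k-1)) = 1" by (rule divide_self[OF d])
      finally show ?thesis by simp
    qed
    then show ?thesis unfolding G_sum[OF assms] using False by (simp add: wt_def)
  qed (use G_sum[OF assms, of "\<lambda>_. 1"] in simp)
  finally show ?thesis .
qed

lemma phi_top:
  assumes k: "k \<in> {1..<m}" and off: "\<forall>a. a \<notin> \<alpha> ` {1..m} \<longrightarrow> \<nu> a = 0"
    and supp: "\<forall>j\<in>{k+1<..m}. \<nu> (\<alpha> j) = 0"
  shows "phi \<alpha> m k \<nu> = \<nu> (\<alpha> (k+1)) * (\<alpha> (k+1) - \<alpha> k)"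
proof -
  have "phi \<alpha> m k \<nu> = (\<Sum>a\<in>\<alpha> ` {1..m}. if a = \<alpha> (k+1) then \<nu> (\<alpha> (k+1)) * (\<alpha> (k+1) - \<alpha> k) else 0)"
    unfolding phi_def
  proof (rule sum.cong[OF refl])
    fix a assume a: "a \<in> \<alpha> ` {1..m}"
    then obtain j where j: "j \<in> {1..m}" "a = \<alpha> j" by auto
    consider "j \<le> k" | "j = k+1" | "j > k+1" by linarith
    then show "\<nu> a * max 0 (a - \<alpha> k) = (if a = \<alpha> (k+1) then \<nu> (\<alpha> (k+1)) * (\<alpha> (k+1) - \<alpha> k) else 0)"
    proof cases
      case 1
      have "\<alpha> j \<le> \<alpha> k" using ale[of j k] j k 1 by auto
      moreover have "\<alpha> j \<noteq> \<alpha> (k+1)" using aeq[of j "k+1"] j k 1 by auto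
      ultimately show ?thesis using j by simp
    next
      case 2
      have "\<alpha> k < \<alpha> (k+1)" using alt[of k "k+1"] k by auto
      then show ?thesis using j 2 by simp
    next
      case 3
      have "\<alpha> j \<noteq> \<alpha> (k+1)" using aeq[of j "k+1"] j k 3 by auto
      then show ?thesis using j 3 supp by auto
    qed
  qed
  also have "\<dots> = \<nu> (\<alpha> (k+1)) * (\<alpha> (k+1) - \<alpha> k)" using k by simp
  finally show ?thesis .
qed

lemma decomp:
  "\<forall>\<nu>. (\<forall>a. a \<notin> \<alpha> ` {1..m} \<longrightarrow> \<nu> a = 0) \<longrightarrow> (\<forall>j\<in>{n<..m}. \<nu> (\<alpha> j) = 0) \<longrightarrow>
     (\<Sum>a\<in>\<alpha> ` {1..m}. \<nu> a) = 0 \<longrightarrow> (\<forall>k\<in>{1..<m}. phi \<alpha> m k \<nu> \<ge> 0) \<longrightarrow> \<nu> \<in> Kc \<alpha> m"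
proof (induction n)
  case 0
  show ?case
  proof (intro allI impI)
    fix \<nu> :: "real \<Rightarrow> real"
    assume off: "\<forall>a. a \<notin> \<alpha> ` {1..m} \<longrightarrow> \<nu> a = 0" and supp: "\<forall>j\<in>{0<..m}. \<nu> (\<alpha> j) = 0"
    have "\<nu> = (\<lambda>_. 0)"
    proof
      fix a show "\<nu> a = 0" using off supp by (cases "a \<in> \<alpha> ` {1..m}") auto
    qed
    then show "\<nu> \<in> Kc \<alpha> m" using K_zero by simp
  qed
next
  case (Suc n)
  show ?case
  proof (intro allI impI)
    fix \<nu> :: "real \<Rightarrow> real"
    assume off: "\<forall>a. a \<notin> \<alpha> ` {1..m} \<longrightarrow> \<nu> a = 0" and supp: "\<forall>j\<in>{Suc n<..m}. \<nu> (\<alpha> j) = 0"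
      and s0: "(\<Sum>a\<in>\<alpha> ` {1..m}. \<nu> a) = 0" and ph: "\<forall>k\<in>{1..<m}. phi \<alpha> m k \<nu> \<ge> 0"
    consider "n = 0" | "n \<ge> m" | "1 \<le> n" "n < m" by linarith
    then show "\<nu> \<in> Kc \<alpha> m"
    proof cases
      case 1
      have "(\<Sum>a\<in>\<alpha> ` {1..m}. \<nu> a) = (\<Sum>a\<in>\<alpha> ` {1..m}. if a = \<alpha> 1 then \<nu> (\<alpha> 1) else 0)"
      proof (rule sum.cong[OF refl])
        fix a assume "a \<in> \<alpha> ` {1..m}"
        then obtain j where j: "j \<in> {1..m}" "a = \<alpha> j" by auto
        show "\<nu> a = (if a = \<alpha> 1 then \<nu> (\<alpha> 1) else 0)"
        proof (cases "j = 1")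
          case False
          then have "\<alpha> j \<noteq> \<alpha> 1" using aeq[of j 1] j by auto
          moreover have "j \<in> {Suc n<..m}" using False j 1 by auto
          ultimately show ?thesis using j supp by simp
        qed (use j in simp)
      qed
      also have "\<dots> = \<nu> (\<alpha> 1)" using m2 by simp
      finally have "\<nu> (\<alpha> 1) = 0" using s0 by simp
      have "\<forall>j\<in>{0<..m}. \<nu> (\<alpha> j) = 0"
      proof
        fix j assume j: "j \<in> {0<..m}"
        show "\<nu> (\<alpha> j) = 0"
        proof (cases "j = 1")
          case True then show ?thesis using \<open>\<nu> (\<alpha> 1) = 0\<close> by simp
        next
          case False then show ?thesis using supp 1 j by auto
        qed
      qed
      then show ?thesis by (intro Suc.IH[rule_format]) (use off s0 ph in auto)
    next
      case 2
      have "\<forall>j\<in>{n<..m}. \<nu> (\<alpha> j) = 0" using 2 by auto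
      then show ?thesis by (intro Suc.IH[rule_format]) (use off s0 ph in auto)
    next
      case 3
      define k where "k = n"
      have k: "k \<in> {1..<m}" using 3 k_def by auto
      define b where "b = \<nu> (\<alpha> (k+1)) / wt \<alpha> k"
      have pt: "phi \<alpha> m k \<nu> = \<nu> (\<alpha> (k+1)) * (\<alpha> (k+1) - \<alpha> k)"
        using phi_top[OF k off] supp k_def by auto
      have akk: "\<alpha> k < \<alpha> (k+1)" using alt[of k "k+1"] k by auto
      have "phi \<alpha> m k \<nu> \<ge> 0" using ph k by blast
      then have "\<nu> (\<alpha> (k+1)) * (\<alpha> (k+1) - \<alpha> k) \<ge> 0" using pt by simp
      then have "\<nu> (\<alpha> (k+1)) \<ge> 0" using akk by (simp add: zero_le_mult_iff)
      then have b0: "b \<ge> 0" using wt_pos[OF k] b_def by simp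
      define \<nu>' where "\<nu>' = (\<lambda>a. \<nu> a - b * Gen \<alpha> k a)"
      have off': "\<forall>a. a \<notin> \<alpha> ` {1..m} \<longrightarrow> \<nu>' a = 0" using off G_out[OF k] \<nu>'_def by simp
      have supp': "\<forall>j\<in>{n<..m}. \<nu>' (\<alpha> j) = 0"
      proof
        fix j assume j: "j \<in> {n<..m}"
        show "\<nu>' (\<alpha> j) = 0"
        proof (cases "j = k+1")
          case True
          then show ?thesis unfolding \<nu>'_def using G_next[OF k] wt_pos[OF k] b_def by simp
        next
          case False
          then have "j > k + 1" using j k_def by auto
          then show ?thesis unfolding \<nu>'_def using G_far[OF k, of j] j supp k_def by auto
        qed
      qed
      have s0': "(\<Sum>a\<in>\<alpha> ` {1..m}. \<nu>' a) = 0"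
        unfolding \<nu>'_def using s0 G_sum1[OF k] by (simp add: sum_subtractf sum_distrib_left[symmetric])
      have ph': "\<forall>j\<in>{1..<m}. phi \<alpha> m j \<nu>' \<ge> 0"
      proof
        fix j assume j: "j \<in> {1..<m}"
        have e: "phi \<alpha> m j \<nu>' = phi \<alpha> m j \<nu> - b * phi \<alpha> m j (Gen \<alpha> k)"
          unfolding \<nu>'_def by (simp add: phi_diff phi_scale)
        show "phi \<alpha> m j \<nu>' \<ge> 0"
        proof (cases "j = k")
          case True
          then show ?thesis using e phi_Gen[OF k k] pt b_def wt_pos[OF k] by simp
        next
          case False
          then show ?thesis using e phi_Gen[OF k j] ph j by simp
        qed
      qed
      have "\<nu>' \<in> Kc \<alpha> m" by (intro Suc.IH[rule_format]) (use off' supp' s0' ph' in auto)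
      then have "(\<lambda>a. \<nu>' a + b * Gen \<alpha> k a) \<in> Kc \<alpha> m"
        by (intro K_add K_scale K_gen k b0)
      moreover have "(\<lambda>a. \<nu>' a + b * Gen \<alpha> k a) = \<nu>" unfolding \<nu>'_def by simp
      ultimately show ?thesis by simp
    qed
  qed
qed

abbreviation "AA \<equiv> \<alpha> ` {1..m}"

lemma one_I: "1 \<in> {1..<m}" using m2 by simp

lemma lin_phi1:
  assumes off: "\<forall>a. a \<notin> AA \<longrightarrow> \<nu> a = 0"
  shows "lin_comb AA \<nu> = phi \<alpha> m 1 \<nu> + \<alpha> 1 * (\<Sum>a\<in>AA. \<nu> a)"
proof -
  have "lin_comb AA \<nu> = (\<Sum>a\<in>AA. \<nu> a * max 0 (a - \<alpha> 1) + \<alpha> 1 * \<nu> a)"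
    unfolding lin_comb_real
  proof (rule sum.cong[OF refl])
    fix a assume "a \<in> AA"
    then obtain j where j: "j \<in> {1..m}" "a = \<alpha> j" by auto
    have "\<alpha> 1 \<le> a" using ale[of 1 j] j by auto
    then show "\<nu> a * a = \<nu> a * max 0 (a - \<alpha> 1) + \<alpha> 1 * \<nu> a" by (simp add: algebra_simps)
  qed
  also have "\<dots> = phi \<alpha> m 1 \<nu> + \<alpha> 1 * (\<Sum>a\<in>AA. \<nu> a)"
    unfolding phi_def by (simp add: sum.distrib sum_distrib_left)
  finally show ?thesis .
qed

lemma N_phi:
  assumes \<beta>: "\<beta> \<in> AA" and N: "\<nu> \<in> Ncone AA \<beta>" and L: "lin_comb AA \<nu> \<ge> 0" and k: "k \<in> {1..<m}"
  shows "phi \<alpha> m k \<nu> \<ge> 0"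
proof -
  obtain i where i: "i \<in> {1..m}" "\<beta> = \<alpha> i" using \<beta> by auto
  have off: "\<forall>a. a \<notin> AA \<longrightarrow> \<nu> a = 0" and pos: "\<forall>a\<in>AA. a \<noteq> \<beta> \<longrightarrow> \<nu> a \<ge> 0"
    and s0: "(\<Sum>a\<in>AA. \<nu> a) = 0" using N unfolding Ncone_def by auto
  have kk: "k \<in> {1..m}" using k by auto
  show ?thesis
  proof (cases "i \<le> k")
    case True
    show ?thesis unfolding phi_def
    proof (rule sum_nonneg)
      fix a assume "a \<in> AA"
      then obtain j where j: "j \<in> {1..m}" "a = \<alpha> j" by auto
      show "\<nu> a * max 0 (a - \<alpha> k) \<ge> 0"
      proof (cases "j \<le> k")
        case True
        then have "\<alpha> j \<le> \<alpha> k" using ale[OF j(1) kk] by simp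
        then show ?thesis using j by simp
      next
        case False
        then have "\<alpha> j \<noteq> \<beta>" using aeq[OF j(1) i(1)] i \<open>i \<le> k\<close> by auto
        then have "\<nu> a \<ge> 0" using pos j by auto
        then show ?thesis by simp
      qed
    qed
  next
    case False
    have "phi \<alpha> m k \<nu> = (\<Sum>a\<in>AA. \<nu> a * (a - \<alpha> k) + \<nu> a * max 0 (\<alpha> k - a))"
      unfolding phi_def by (rule sum.cong[OF refl]) (simp add: algebra_simps max_def)
    also have "\<dots> = lin_comb AA \<nu> - \<alpha> k * (\<Sum>a\<in>AA. \<nu> a) + (\<Sum>a\<in>AA. \<nu> a * max 0 (\<alpha> k - a))"
      unfolding lin_comb_real by (simp add: sum.distrib sum_subtractf sum_distrib_left right_diff_distrib mult.commute)
    also have "\<dots> = lin_comb AA \<nu> + (\<Sum>a\<in>AA. \<nu> a * max 0 (\<alpha> k - a))" using s0 by simp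
    also have "\<dots> \<ge> 0"
    proof -
      have "(\<Sum>a\<in>AA. \<nu> a * max 0 (\<alpha> k - a)) \<ge> 0"
      proof (rule sum_nonneg)
        fix a assume "a \<in> AA"
        then obtain j where j: "j \<in> {1..m}" "a = \<alpha> j" by auto
        show "\<nu> a * max 0 (\<alpha> k - a) \<ge> 0"
        proof (cases "k \<le> j")
          case True
          then have "\<alpha> k \<le> \<alpha> j" using ale[OF kk j(1)] by simp
          then show ?thesis using j by simp
        next
          case False
          then have "\<alpha> j \<noteq> \<beta>" using aeq[OF j(1) i(1)] i \<open>\<not> i \<le> k\<close> by auto
          then have "\<nu> a \<ge> 0" using pos j by auto
          then show ?thesis by simp
        qed
      qed
      then show ?thesis using L by simp
    qed
    finally show ?thesis .
  qed
qed

lemma N_K: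
  assumes \<beta>: "\<beta> \<in> AA" and N: "\<nu> \<in> Ncone AA \<beta>" and L: "lin_comb AA \<nu> \<ge> 0"
  shows "\<nu> \<in> Kc \<alpha> m"
proof -
  have off: "\<forall>a. a \<notin> AA \<longrightarrow> \<nu> a = 0" and s0: "(\<Sum>a\<in>AA. \<nu> a) = 0" using N unfolding Ncone_def by auto
  show ?thesis
    by (rule decomp[of m, rule_format]) (use off s0 N_phi[OF \<beta> N L] in auto)
qed

lemma circ_lt: "circ_fun {0..} AA \<nu> < \<infinity> \<longleftrightarrow> lin_comb AA \<nu> \<ge> 0"
  by (simp add: circ_char)

lemma circ_0: "lin_comb AA \<nu> \<ge> 0 \<Longrightarrow> circ_fun {0..} AA \<nu> = 0"
  by (simp add: circ_char)

lemma NC_K: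
  assumes "l \<in> norm_circuits {0..} AA"
  shows "l \<in> Kc \<alpha> m" "func_form {0..} AA l = (l, 0)"
    and "\<exists>\<beta>\<in>AA. l \<in> Ncone AA \<beta> \<and> l \<beta> = -1 \<and> l \<noteq> (\<lambda>_. 0)"
proof -
  obtain \<beta> where \<beta>: "\<beta> \<in> AA" "is_X_circuit {0..} AA \<beta> l" "l \<beta> = -1"
    using assms unfolding norm_circuits_def by auto
  have N: "l \<in> Ncone AA \<beta>" and nz: "l \<noteq> (\<lambda>_. 0)" and L: "lin_comb AA l \<ge> 0"
    using \<beta>(2) unfolding is_X_circuit_def circ_lt by auto
  show "l \<in> Kc \<alpha> m" by (rule N_K[OF \<beta>(1) N L])
  show "func_form {0..} AA l = (l, 0)" unfolding func_form_def using circ_0[OF L] by simp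
  show "\<exists>\<beta>\<in>AA. l \<in> Ncone AA \<beta> \<and> l \<beta> = -1 \<and> l \<noteq> (\<lambda>_. 0)" using \<beta> N nz by auto
qed

lemma Gen_nz:
  assumes "k \<in> {1..<m}"
  shows "Gen \<alpha> k \<noteq> (\<lambda>_. 0)"
  using G_self[OF assms] by (metis zero_neq_neg_one)

lemma Gen_N:
  assumes k: "k \<in> {1..<m}"
  shows "Gen \<alpha> k \<in> Ncone AA (\<alpha> k)"
  unfolding Ncone_def
proof (intro CollectI conjI allI impI ballI)
  fix a assume "a \<notin> AA" then show "Gen \<alpha> k a = 0" using G_out[OF k] by simp
next
  fix a assume a: "a \<in> AA" "a \<noteq> \<alpha> k"
  then obtain j where j: "j \<in> {1..m}" "a = \<alpha> j" by auto
  then have "j \<noteq> k" using a by auto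
  then show "Gen \<alpha> k a \<ge> 0" using G_nonneg[OF k j(1)] j by simp
next
  show "(\<Sum>a\<in>AA. Gen \<alpha> k a) = 0" by (rule G_sum1[OF k])
qed

lemma Gen_L:
  assumes k: "k \<in> {1..<m}"
  shows "lin_comb AA (Gen \<alpha> k) \<ge> 0"
proof -
  have "lin_comb AA (Gen \<alpha> k) = phi \<alpha> m 1 (Gen \<alpha> k)"
    using lin_phi1[of "Gen \<alpha> k"] G_out[OF k] G_sum1[OF k] by simp
  also have "\<dots> \<ge> 0" using phi_Gen[OF k one_I] W_pos[OF k] by auto
  finally show ?thesis .
qed

lemma Gen_NC:
  assumes k: "k \<in> {1..<m}"
  shows "Gen \<alpha> k \<in> norm_circuits {0..} AA"
proof -
  have kA: "\<alpha> k \<in> AA" using k by auto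
  have nd: "\<not> (\<exists>\<nu>1 \<in> Ncone AA (\<alpha> k). \<exists>\<nu>2 \<in> Ncone AA (\<alpha> k). \<exists>t::real. 0 < t \<and> t < 1 \<and>
          \<not> proportional \<nu>1 \<nu>2 \<and>
          Gen \<alpha> k = (\<lambda>a. (1 - t) * \<nu>1 a + t * \<nu>2 a) \<and>
          affine_on_segment {0..} AA \<nu>1 \<nu>2)"
  proof
    assume "\<exists>\<nu>1 \<in> Ncone AA (\<alpha> k). \<exists>\<nu>2 \<in> Ncone AA (\<alpha> k). \<exists>t::real. 0 < t \<and> t < 1 \<and>
          \<not> proportional \<nu>1 \<nu>2 \<and>
          Gen \<alpha> k = (\<lambda>a. (1 - t) * \<nu>1 a + t * \<nu>2 a) \<and>
          affine_on_segment {0..} AA \<nu>1 \<nu>2"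
    then obtain \<nu>1 \<nu>2 t where n1: "\<nu>1 \<in> Ncone AA (\<alpha> k)" and n2: "\<nu>2 \<in> Ncone AA (\<alpha> k)"
      and t: "0 < t" "t < 1" and np: "\<not> proportional \<nu>1 \<nu>2"
      and eq: "Gen \<alpha> k = (\<lambda>a. (1 - t) * \<nu>1 a + t * \<nu>2 a)"
      and aff: "affine_on_segment {0..} AA \<nu>1 \<nu>2" by blast
    have L1: "lin_comb AA \<nu>1 \<ge> 0" and L2: "lin_comb AA \<nu>2 \<ge> 0"
      using aff unfolding affine_on_segment_def circ_lt by auto
    have K1: "(\<lambda>a. (1 - t) * \<nu>1 a) \<in> Kc \<alpha> m" using K_scale[OF N_K[OF kA n1 L1]] t by simp
    have K2: "(\<lambda>a. t * \<nu>2 a) \<in> Kc \<alpha> m" using K_scale[OF N_K[OF kA n2 L2]] t by simp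
    have e1: "(\<lambda>a. (1 - t) * \<nu>1 a + t * \<nu>2 a) = (\<lambda>a. 1 * Gen \<alpha> k a)" using eq by simp
    have e2: "(\<lambda>a. t * \<nu>2 a + (1 - t) * \<nu>1 a) = (\<lambda>a. 1 * Gen \<alpha> k a)" using eq by (simp add: add.commute)
    obtain s1 where s1: "(\<lambda>a. (1 - t) * \<nu>1 a) = (\<lambda>a. s1 * Gen \<alpha> k a)"
      using K_extreme[OF k K1 K2 e1] by blast
    obtain s2 where s2: "(\<lambda>a. t * \<nu>2 a) = (\<lambda>a. s2 * Gen \<alpha> k a)"
      using K_extreme[OF k K2 K1 e2] by blast
    define c1 where "c1 = s1 / (1 - t)"
    define c2 where "c2 = s2 / t"
    have v1: "\<nu>1 a = c1 * Gen \<alpha> k a" for a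
      using fun_cong[OF s1, of a] t unfolding c1_def by (simp add: field_simps)
    have v2: "\<nu>2 a = c2 * Gen \<alpha> k a" for a
      using fun_cong[OF s2, of a] t unfolding c2_def by (simp add: field_simps)
    have "proportional \<nu>1 \<nu>2"
    proof (cases "c1 = 0")
      case True
      then have "\<nu>1 = (\<lambda>a. 0 * \<nu>2 a)" using v1 by auto
      then show ?thesis unfolding proportional_def by blast
    next
      case False
      then have "\<nu>2 = (\<lambda>a. (c2 / c1) * \<nu>1 a)" using v1 v2 by auto
      then show ?thesis unfolding proportional_def by blast
    qed
    then show False using np by simp
  qed
  have "is_X_circuit {0..} AA (\<alpha> k) (Gen \<alpha> k)"
    unfolding is_X_circuit_def using Gen_N[OF k] Gen_nz[OF k] Gen_L[OF k] nd circ_lt by blast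
  then show ?thesis unfolding norm_circuits_def using kA G_self[OF k] by blast
qed

lemma in_G:
  assumes J: "finite J" "J \<subseteq> {1..<m}" and c: "\<forall>j\<in>J. c j \<ge> 0"
  shows "((\<lambda>a. \<Sum>j\<in>J. c j * Gen \<alpha> j a), 0) \<in> circuit_graph {0..} AA"
proof -
  define S where "S = Gen \<alpha> ` J"
  define c' where "c' = (\<lambda>l. \<Sum>j\<in>{x \<in> J. Gen \<alpha> x = l}. c j)"
  have SN: "S \<subseteq> norm_circuits {0..} AA" unfolding S_def using Gen_NC J(2) by auto
  have ff: "func_form {0..} AA l = (l, 0)" if "l \<in> S" for l using NC_K(2) SN that by auto
  have fin: "finite S" unfolding S_def using J(1) by simp
  have c'0: "\<forall>l\<in>S. c' l \<ge> 0" unfolding c'_def using c by (auto intro: sum_nonneg)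
  have nu: "(\<lambda>a. \<Sum>j\<in>J. c j * Gen \<alpha> j a) = (\<lambda>a. \<Sum>l\<in>S. c' l * fst (func_form {0..} AA l) a)"
  proof
    fix a
    have "(\<Sum>j\<in>J. c j * Gen \<alpha> j a) = (\<Sum>l\<in>S. \<Sum>j\<in>{x \<in> J. Gen \<alpha> x = l}. c j * Gen \<alpha> j a)"
      unfolding S_def by (rule sum.image_gen[OF J(1)])
    also have "\<dots> = (\<Sum>l\<in>S. c' l * fst (func_form {0..} AA l) a)"
    proof (rule sum.cong[OF refl])
      fix l assume l: "l \<in> S"
      have "(\<Sum>j\<in>{x \<in> J. Gen \<alpha> x = l}. c j * Gen \<alpha> j a) = (\<Sum>j\<in>{x \<in> J. Gen \<alpha> x = l}. c j * l a)"
        by (rule sum.cong) auto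
      also have "\<dots> = c' l * l a" unfolding c'_def by (simp add: sum_distrib_right)
      finally show "(\<Sum>j\<in>{x \<in> J. Gen \<alpha> x = l}. c j * Gen \<alpha> j a) = c' l * fst (func_form {0..} AA l) a"
        using ff[OF l] by simp
    qed
    finally show "(\<Sum>j\<in>J. c j * Gen \<alpha> j a) = (\<Sum>l\<in>S. c' l * fst (func_form {0..} AA l) a)" .
  qed
  have r: "(0::real) = (\<Sum>l\<in>S. c' l * snd (func_form {0..} AA l)) + 0"
    using ff by simp
  show ?thesis unfolding circuit_graph_def
    using fin SN c'0 nu r by blast
qed

lemma G_elem:
  assumes "z \<in> circuit_graph {0..} AA"
  shows "fst z \<in> Kc \<alpha> m" "snd z \<ge> 0"
proof -
  obtain \<nu> r S c d where z: "z = (\<nu>, r)" and S: "finite S" "S \<subseteq> norm_circuits {0..} AA"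
    and c: "\<forall>l\<in>S. c l \<ge> 0" and d: "d \<ge> 0"
    and nu: "\<nu> = (\<lambda>a. \<Sum>l\<in>S. c l * fst (func_form {0..} AA l) a)"
    and r: "r = (\<Sum>l\<in>S. c l * snd (func_form {0..} AA l)) + d"
    using assms unfolding circuit_graph_def by blast
  have ff: "func_form {0..} AA l = (l, 0)" if "l \<in> S" for l using NC_K(2) S that by auto
  have "\<nu> = (\<lambda>a. \<Sum>l\<in>S. c l * l a)" unfolding nu using ff by simp
  moreover have "S \<subseteq> Kc \<alpha> m" using NC_K(1) S by auto
  ultimately show "fst z \<in> Kc \<alpha> m" using K_sum[OF S(1)] c z by simp
  have "r = d" unfolding r using ff by simp
  then show "snd z \<ge> 0" using z d by simp
qed

lemma Gen_ff: "k \<in> {1..<m} \<Longrightarrow> func_form {0..} AA (Gen \<alpha> k) = (Gen \<alpha> k, 0)"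
  using NC_K(2)[OF Gen_NC] by simp

lemma Gen_extreme:
  assumes k: "k \<in> {1..<m}"
  shows "extreme_ray (circuit_graph {0..} AA) (func_form {0..} AA (Gen \<alpha> k))"
  unfolding extreme_ray_def Gen_ff[OF k]
proof (intro conjI ballI impI subsetI)
  show "(Gen \<alpha> k, 0) \<noteq> (\<lambda>_. 0, 0)" using Gen_nz[OF k] by simp
next
  fix z assume "z \<in> ray (Gen \<alpha> k, 0)"
  then obtain t where t: "t \<ge> 0" "z = ((\<lambda>a. t * Gen \<alpha> k a), 0)" unfolding ray_def by auto
  have "((\<lambda>a. \<Sum>j\<in>{k}. (\<lambda>_. t) j * Gen \<alpha> j a), 0) \<in> circuit_graph {0..} AA"
    by (rule in_G) (use k t in auto)
  then show "z \<in> circuit_graph {0..} AA" using t by simp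
next
  fix x y assume x: "x \<in> circuit_graph {0..} AA" and y: "y \<in> circuit_graph {0..} AA"
    and xy: "((\<lambda>a. fst x a + fst y a), snd x + snd y) \<in> ray (Gen \<alpha> k, 0)"
  obtain t where t: "t \<ge> 0" "(\<lambda>a. fst x a + fst y a) = (\<lambda>a. t * Gen \<alpha> k a)" "snd x + snd y = 0"
    using xy unfolding ray_def by auto
  have sx: "snd x = 0" and sy: "snd y = 0" using G_elem(2)[OF x] G_elem(2)[OF y] t(3) by auto
  have t2: "(\<lambda>a. fst y a + fst x a) = (\<lambda>a. t * Gen \<alpha> k a)" using t(2) by (simp add: add.commute)
  obtain s1 where s1: "s1 \<ge> 0" "fst x = (\<lambda>a. s1 * Gen \<alpha> k a)"
    using K_extreme[OF k G_elem(1)[OF x] G_elem(1)[OF y] t(2)] by blast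
  obtain s2 where s2: "s2 \<ge> 0" "fst y = (\<lambda>a. s2 * Gen \<alpha> k a)"
    using K_extreme[OF k G_elem(1)[OF y] G_elem(1)[OF x] t2] by blast
  have "x = ((\<lambda>a. s1 * fst (Gen \<alpha> k, 0::real) a), s1 * snd (Gen \<alpha> k, 0::real))"
    using s1 sx by (simp add: prod_eq_iff)
  then show "x \<in> ray (Gen \<alpha> k, 0)" unfolding ray_def using s1(1) by blast
  have "y = ((\<lambda>a. s2 * fst (Gen \<alpha> k, 0::real) a), s2 * snd (Gen \<alpha> k, 0::real))"
    using s2 sy by (simp add: prod_eq_iff)
  then show "y \<in> ray (Gen \<alpha> k, 0)" unfolding ray_def using s2(1) by blast
qed

lemma reduced_eq: "reduced_circuits {0..} AA = Gen \<alpha> ` {1..<m}"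
proof
  show "Gen \<alpha> ` {1..<m} \<subseteq> reduced_circuits {0..} AA"
    unfolding reduced_circuits_def using Gen_NC Gen_extreme by auto
next
  show "reduced_circuits {0..} AA \<subseteq> Gen \<alpha> ` {1..<m}"
  proof
    fix l assume l: "l \<in> reduced_circuits {0..} AA"
    then have lN: "l \<in> norm_circuits {0..} AA" and ex: "extreme_ray (circuit_graph {0..} AA) (func_form {0..} AA l)"
      unfolding reduced_circuits_def by auto
    have ff: "func_form {0..} AA l = (l, 0)" by (rule NC_K(2)[OF lN])
    obtain \<beta> where \<beta>: "\<beta> \<in> AA" "l \<in> Ncone AA \<beta>" "l \<beta> = -1" "l \<noteq> (\<lambda>_. 0)"
      using NC_K(3)[OF lN] by blast
    obtain c where c: "\<forall>i. 0 \<le> c i" "l = (\<lambda>a. \<Sum>i\<in>{1..<m}. c i * Gen \<alpha> i a)"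
      using NC_K(1)[OF lN] unfolding Kc_def by blast
    obtain j0 where j0: "j0 \<in> {1..<m}" "c j0 \<noteq> 0"
    proof (rule ccontr)
      assume "\<not> thesis"
      then have "\<forall>j\<in>{1..<m}. c j = 0" using that by blast
      then have "l = (\<lambda>_. 0)" using c(2) by simp
      then show False using \<beta>(4) by simp
    qed
    have cpos: "c j0 > 0" using c(1) j0(2) by (metis order_le_less)
    define x where "x = ((\<lambda>a. \<Sum>j\<in>{j0}. c j * Gen \<alpha> j a), 0::real)"
    define y where "y = ((\<lambda>a. \<Sum>j\<in>{1..<m}-{j0}. c j * Gen \<alpha> j a), 0::real)"
    have xG: "x \<in> circuit_graph {0..} AA" unfolding x_def by (rule in_G) (use j0 c in auto)
    have yG: "y \<in> circuit_graph {0..} AA" unfolding y_def by (rule in_G) (use j0 c in auto)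
    have sum: "(\<lambda>a. fst x a + fst y a) = (\<lambda>a. 1 * fst (l, 0::real) a)"
    proof
      fix a
      have "(\<Sum>i\<in>{1..<m}. c i * Gen \<alpha> i a) = c j0 * Gen \<alpha> j0 a + (\<Sum>i\<in>{1..<m}-{j0}. c i * Gen \<alpha> i a)"
        using j0(1) by (simp add: sum.remove)
      then show "fst x a + fst y a = 1 * fst (l, 0::real) a" unfolding x_def y_def using c(2) by simp
    qed
    have "((\<lambda>a. fst x a + fst y a), snd x + snd y) \<in> ray (l, 0)"
      unfolding ray_def using sum x_def y_def by force
    then have "x \<in> ray (l, 0)" using ex xG yG unfolding ff extreme_ray_def by blast
    then obtain t where t: "t \<ge> 0" "(\<lambda>a. c j0 * Gen \<alpha> j0 a) = (\<lambda>a. t * l a)"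
      unfolding ray_def x_def by auto
    have e: "- c j0 = t * l (\<alpha> j0)" using fun_cong[OF t(2), of "\<alpha> j0"] G_self[OF j0(1)] by simp
    have tn: "t \<noteq> 0" using e cpos by auto
    have "l (\<alpha> j0) < 0"
    proof -
      have "t * l (\<alpha> j0) < 0" using e cpos by simp
      then show ?thesis using t(1) by (simp add: mult_less_0_iff)
    qed
    moreover have "\<alpha> j0 \<in> AA" using j0 by auto
    ultimately have "\<alpha> j0 = \<beta>" using \<beta>(2) unfolding Ncone_def by force
    then have "t = c j0" using e \<beta>(3) by simp
    then have "l = Gen \<alpha> j0"
    proof -
      assume tc: "t = c j0"
      show "l = Gen \<alpha> j0"
      proof
        fix a show "l a = Gen \<alpha> j0 a" using fun_cong[OF t(2), of a] tc cpos by simp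
      qed
    qed
    then show "l \<in> Gen \<alpha> ` {1..<m}" using j0(1) by simp
  qed
qed

lemma rhs_eq: "{Dv \<alpha>} \<union> {Tv \<alpha> i | i. 1 < i \<and> i < m} = Gen \<alpha> ` {1..<m}"
proof
  show "{Dv \<alpha>} \<union> {Tv \<alpha> i | i. 1 < i \<and> i < m} \<subseteq> Gen \<alpha> ` {1..<m}"
  proof
    fix v assume "v \<in> {Dv \<alpha>} \<union> {Tv \<alpha> i | i. 1 < i \<and> i < m}"
    then consider "v = Dv \<alpha>" | i where "1 < i" "i < m" "v = Tv \<alpha> i" by blast
    then show "v \<in> Gen \<alpha> ` {1..<m}"
    proof cases
      case 1 then show ?thesis using m2 by (intro image_eqI[of _ _ 1]) (auto simp: Gen_def)
    next
      case 2 then show ?thesis by (intro image_eqI[of _ _ i]) (auto simp: Gen_def)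
    qed
  qed
  show "Gen \<alpha> ` {1..<m} \<subseteq> {Dv \<alpha>} \<union> {Tv \<alpha> i | i. 1 < i \<and> i < m}"
    by (auto simp: Gen_def)
qed

end

theorem mainTheorem20:
  fixes \<alpha> :: "nat \<Rightarrow> real" and m :: nat
  assumes "m \<ge> 2"
    and "strict_mono_on {1..m} \<alpha>"
  shows "reduced_circuits {0..} (\<alpha> ` {1..m}) =
           {(\<lambda>a. (if a = \<alpha> 2 then 1 else 0) - (if a = \<alpha> 1 then 1 else 0))}
         \<union> {(\<lambda>a. (\<alpha> (i+1) - \<alpha> i) / (\<alpha> (i+1) - \<alpha> (i-1)) * (if a = \<alpha> (i-1) then 1 else 0)
                 + (\<alpha> i - \<alpha> (i-1)) / (\<alpha> (i+1) - \<alpha> (i-1)) * (if a = \<alpha> (i+1) then 1 else 0)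
                 - (if a = \<alpha> i then 1 else 0)) | i. 1 < i \<and> i < m}"
  using reduced_eq[OF assms] rhs_eq[OF assms] unfolding Dv_def Tv_def by simp

end
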